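(* There exists a unique $\mu_{\mathrm{cr}}>0$ such that: (a) the problem $(\dot w_p/H_p^3)_p-\mu\rho_p\dot w=0$ on $(-1,0)$, $\dot w(-1)=0$, $-\dot w_p(0)/H_p(0)^3+\mu\rho(0)\dot w(0)=0$ has a nontrivial solution $\dot w$ for $\mu=\mu_{\mathrm{cr}}$, and one can take $\dot w=\Phi(\cdot;\mu_{\mathrm{cr}})$; (b) if $0\le\mu\le\mu_{\mathrm{cr}}$, then $\Phi(p;\mu)>0$ for $-1<p\le0$ and $\Phi_p(p;\mu)>0$ for $-1\le p\le0$; (c) for $0\le\mu<\mu_{\mathrm{cr}}$, $A(\mu)<0$.
   Context: Fix $\alpha\in(0,1)$, $\rho\in C^{2+\alpha}([-1,0])$ with $\rho>0$ and $\rho_p\le0$, and $H\in C^{3+\alpha}([-1,0])$ with $H_p>0$. For $\mu\ge0$, $\Phi(\cdot;\mu)$ denotes the solution of the initial value problem $(\Phi_p/H_p^3)_p-\mu\rho_p\Phi=0$ on $(-1,0)$, $\Phi(-1)=0$, $\Phi_p(-1)=1$, and $A(\mu):=-\Phi_p(0;\mu)/H_p(0)^3+\mu\rho(0)\Phi(0;\mu)$. *)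

theory Defs
  imports "HOL-Analysis.Analysis"
begin

definition holder_on :: "real \<Rightarrow> real set \<Rightarrow> (real \<Rightarrow> real) \<Rightarrow> bool" where
  "holder_on a S f \<longleftrightarrow> (\<exists>C. \<forall>x\<in>S. \<forall>y\<in>S. \<bar>f x - f y\<bar> \<le> C * \<bar>x - y\<bar> powr a)"

definition C_k_alpha :: "nat \<Rightarrow> real \<Rightarrow> real set \<Rightarrow> (real \<Rightarrow> real) \<Rightarrow> bool" where
  "C_k_alpha k a S f \<longleftrightarrow>
     (\<exists>D :: nat \<Rightarrow> real \<Rightarrow> real.
        (\<forall>x\<in>S. D 0 x = f x) \<and>
        (\<forall>i<k. \<forall>x\<in>S. (D i has_real_derivative D (Suc i) x) (at x within S)) \<and>
        holder_on a S (D k))"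

text \<open>(Phi, Phi') solves on [-1,0] the initial value problem
  (Phi_p / H_p^3)_p - mu rho_p Phi = 0,  Phi(-1) = 0,  Phi_p(-1) = 1.
  Here Hp and rhop denote the derivatives H_p and rho_p.\<close>
definition is_Phi :: "(real \<Rightarrow> real) \<Rightarrow> (real \<Rightarrow> real) \<Rightarrow> real
                      \<Rightarrow> (real \<Rightarrow> real) \<Rightarrow> (real \<Rightarrow> real) \<Rightarrow> bool" where
  "is_Phi Hp rhop mu Phi Phi' \<longleftrightarrow>
     Phi (-1) = 0 \<and> Phi' (-1) = 1 \<and>
     (\<forall>x\<in>{-1..0}. (Phi has_real_derivative Phi' x) (at x within {-1..0})) \<and>
     (\<forall>x\<in>{-1..0}. ((\<lambda>p. Phi' p / Hp p ^ 3) has_real_derivative mu * rhop x * Phi x)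
                     (at x within {-1..0}))"

text \<open>The solution Phi(.;mu) together with its derivative Phi_p(.;mu), normalised to 0
  outside [-1,0] so that it is uniquely determined.\<close>
definition Phi_pair :: "(real \<Rightarrow> real) \<Rightarrow> (real \<Rightarrow> real) \<Rightarrow> real
                        \<Rightarrow> (real \<Rightarrow> real) \<times> (real \<Rightarrow> real)" where
  "Phi_pair Hp rhop mu = (THE (Phi, Phi'). is_Phi Hp rhop mu Phi Phi' \<and>
       (\<forall>x. x \<notin> {-1..0} \<longrightarrow> Phi x = 0 \<and> Phi' x = 0))"

definition Phi :: "(real \<Rightarrow> real) \<Rightarrow> (real \<Rightarrow> real) \<Rightarrow> real \<Rightarrow> real \<Rightarrow> real" where
  "Phi Hp rhop mu = fst (Phi_pair Hp rhop mu)"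

definition Phi_p :: "(real \<Rightarrow> real) \<Rightarrow> (real \<Rightarrow> real) \<Rightarrow> real \<Rightarrow> real \<Rightarrow> real" where
  "Phi_p Hp rhop mu = snd (Phi_pair Hp rhop mu)"

definition A_fun :: "(real \<Rightarrow> real) \<Rightarrow> (real \<Rightarrow> real) \<Rightarrow> (real \<Rightarrow> real) \<Rightarrow> real \<Rightarrow> real" where
  "A_fun Hp rho rhop mu = - Phi_p Hp rhop mu 0 / Hp 0 ^ 3 + mu * rho 0 * Phi Hp rhop mu 0"

definition is_bvp_sol :: "(real \<Rightarrow> real) \<Rightarrow> (real \<Rightarrow> real) \<Rightarrow> (real \<Rightarrow> real) \<Rightarrow> real
                          \<Rightarrow> (real \<Rightarrow> real) \<Rightarrow> (real \<Rightarrow> real) \<Rightarrow> bool" where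
  "is_bvp_sol Hp rho rhop mu w w' \<longleftrightarrow>
     w (-1) = 0 \<and> - w' 0 / Hp 0 ^ 3 + mu * rho 0 * w 0 = 0 \<and>
     (\<forall>x\<in>{-1..0}. (w has_real_derivative w' x) (at x within {-1..0})) \<and>
     (\<forall>x\<in>{-1..0}. ((\<lambda>p. w' p / Hp p ^ 3) has_real_derivative mu * rhop x * w x)
                     (at x within {-1..0}))"

end

theory Submission
  imports Defs
begin

lemma mono_nonpos:
  fixes f f' :: "real \<Rightarrow> real"
  assumes d: "\<forall>x\<in>{a..b}. (f has_real_derivative f' x) (at x within {a..b})"
    and n: "\<forall>x\<in>{a..b}. f' x \<le> 0" and st: "a \<le> s" "s \<le> t" "t \<le> b"
  shows "f t \<le> f s"
proof -
  have "continuous_on {a..b} f" using d by (intro DERIV_continuous_on) auto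
  then have cont: "continuous_on {s..t} f" by (rule continuous_on_subset) (use st in auto)
  show ?thesis
  proof (rule DERIV_nonpos_imp_decreasing_open[OF \<open>s\<le>t\<close> _ cont])
    fix x assume x: "s < x" "x < t"
    then have "at x within {a..b} = at x" using st by (intro at_within_Icc_at) auto
    moreover have xi: "x \<in> {a..b}" using x st by auto
    ultimately show "\<exists>y. DERIV f x :> y \<and> y \<le> 0" using d n by force
  qed
qed

lemma mono_nonneg:
  fixes f f' :: "real \<Rightarrow> real"
  assumes d: "\<forall>x\<in>{a..b}. (f has_real_derivative f' x) (at x within {a..b})"
    and n: "\<forall>x\<in>{a..b}. f' x \<ge> 0" and st: "a \<le> s" "s \<le> t" "t \<le> b"
  shows "f s \<le> f t"
proof -
  have "(\<lambda>x. - f x) t \<le> (\<lambda>x. - f x) s"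
    by (rule mono_nonpos[where f'="\<lambda>x. - f' x"]) (use d n st in \<open>auto intro!: derivative_eq_intros\<close>)
  then show ?thesis by simp
qed

lemma mono_pos:
  fixes f f' :: "real \<Rightarrow> real"
  assumes d: "\<forall>x\<in>{a..b}. (f has_real_derivative f' x) (at x within {a..b})"
    and n: "\<forall>x\<in>{a..b}. f' x > 0" and st: "a \<le> s" "s < t" "t \<le> b"
  shows "f s < f t"
proof -
  have "continuous_on {a..b} f" using d by (intro DERIV_continuous_on) auto
  then have cont: "continuous_on {s..t} f" by (rule continuous_on_subset) (use st in auto)
  show ?thesis
  proof (rule DERIV_pos_imp_increasing_open[OF \<open>s<t\<close> _ cont])
    fix x assume x: "s < x" "x < t"
    then have "at x within {a..b} = at x" using st by (intro at_within_Icc_at) auto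
    moreover have xi: "x \<in> {a..b}" using x st by auto
    ultimately show "\<exists>y. DERIV f x :> y \<and> y > 0" using d n by force
  qed
qed

lemma energy_ineq:
  fixes x y x' y' L E :: real
  assumes "\<bar>x'\<bar> \<le> L * \<bar>y\<bar> + E" "\<bar>y'\<bar> \<le> L * \<bar>x\<bar> + E" "0 \<le> L" "0 \<le> E"
  shows "2*x*x' + 2*y*y' \<le> (2*L+2) * (x^2+y^2+E^2)"
proof -
  have a: "2*x*x' \<le> 2*\<bar>x\<bar>*(L*\<bar>y\<bar>+E)"
  proof -
    have "x*x' \<le> \<bar>x\<bar>*\<bar>x'\<bar>" by (metis abs_ge_self abs_mult)
    also have "\<dots> \<le> \<bar>x\<bar>*(L*\<bar>y\<bar>+E)" using assms(1) by (rule mult_left_mono) simp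
    finally show ?thesis by simp
  qed
  have b: "2*y*y' \<le> 2*\<bar>y\<bar>*(L*\<bar>x\<bar>+E)"
  proof -
    have "y*y' \<le> \<bar>y\<bar>*\<bar>y'\<bar>" by (metis abs_ge_self abs_mult)
    also have "\<dots> \<le> \<bar>y\<bar>*(L*\<bar>x\<bar>+E)" using assms(2) by (rule mult_left_mono) simp
    finally show ?thesis by simp
  qed
  have c: "2*\<bar>x\<bar>*\<bar>y\<bar> \<le> x^2+y^2"
    using sum_squares_ge_zero[of "\<bar>x\<bar> - \<bar>y\<bar>" 0] by (simp add: power2_eq_square algebra_simps)
  have d: "2*E*\<bar>x\<bar> \<le> E^2 + x^2"
    using sum_squares_ge_zero[of "E - \<bar>x\<bar>" 0] by (simp add: power2_eq_square algebra_simps)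
  have e: "2*E*\<bar>y\<bar> \<le> E^2 + y^2"
    using sum_squares_ge_zero[of "E - \<bar>y\<bar>" 0] by (simp add: power2_eq_square algebra_simps)
  have f: "L*(2*\<bar>x\<bar>*\<bar>y\<bar>) \<le> L*(x^2+y^2)" using c assms(3) by (rule mult_left_mono[OF _ ]) 
  have g: "0 \<le> L * E^2" using assms by simp
  have "2*x*x' + 2*y*y' \<le> 2*\<bar>x\<bar>*(L*\<bar>y\<bar>+E) + 2*\<bar>y\<bar>*(L*\<bar>x\<bar>+E)" using a b by linarith
  also have "\<dots> = L*(2*\<bar>x\<bar>*\<bar>y\<bar>) + L*(2*\<bar>x\<bar>*\<bar>y\<bar>) + 2*E*\<bar>x\<bar> + 2*E*\<bar>y\<bar>" by (simp add: algebra_simps)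
  also have "\<dots> \<le> L*(x^2+y^2) + L*(x^2+y^2) + (E^2+x^2) + (E^2+y^2)" using f d e by linarith
  also have "\<dots> \<le> (2*L+2) * (x^2+y^2+E^2)" using g by (simp add: algebra_simps)
  finally show ?thesis .
qed

lemma energy:
  fixes x y x' y' :: "real \<Rightarrow> real" and L E :: real
  assumes dx: "\<forall>p\<in>{-1..0}. (x has_real_derivative x' p) (at p within {-1..0})"
    and dy: "\<forall>p\<in>{-1..0}. (y has_real_derivative y' p) (at p within {-1..0})"
    and bx: "\<forall>p\<in>{-1..0}. \<bar>x' p\<bar> \<le> L * \<bar>y p\<bar> + E"
    and byy: "\<forall>p\<in>{-1..0}. \<bar>y' p\<bar> \<le> L * \<bar>x p\<bar> + E"
    and L: "0 \<le> L" and E: "0 \<le> E"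
  shows "\<forall>p\<in>{-1..0}. (x p)^2 + (y p)^2 + E^2 \<le> ((x (-1))^2 + (y (-1))^2 + E^2) * exp ((2*L+2)*(p+1))"
proof
  fix p :: real assume p: "p \<in> {-1..0}"
  define K where "K = 2*L+2"
  define W where "W = (\<lambda>q. ((x q)^2 + (y q)^2 + E^2) * exp (-K*(q+1)))"
  define W' where "W' = (\<lambda>q. (2*x q*x' q + 2*y q*y' q) * exp (-K*(q+1)) - K * (((x q)^2 + (y q)^2 + E^2) * exp (-K*(q+1))))"
  have dW: "\<forall>q\<in>{-1..0}. (W has_real_derivative W' q) (at q within {-1..0})"
  proof
    fix q :: real assume q: "q \<in> {-1..0}"
    show "(W has_real_derivative W' q) (at q within {-1..0})"
      unfolding W_def W'_def
      using dx[rule_format, OF q] dy[rule_format, OF q]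
      by (auto intro!: derivative_eq_intros simp: algebra_simps)
  qed
  have nW: "\<forall>q\<in>{-1..0}. W' q \<le> 0"
  proof
    fix q :: real assume q: "q \<in> {-1..0}"
    have "2*x q*x' q + 2*y q*y' q \<le> K * ((x q)^2 + (y q)^2 + E^2)"
      unfolding K_def using energy_ineq[OF bx[rule_format, OF q] byy[rule_format, OF q] L E] .
    then have "(2*x q*x' q + 2*y q*y' q) * exp (-K*(q+1)) \<le> K * ((x q)^2 + (y q)^2 + E^2) * exp (-K*(q+1))"
      by (rule mult_right_mono) simp
    then show "W' q \<le> 0" unfolding W'_def by (simp add: algebra_simps)
  qed
  have "W p \<le> W (-1)" using mono_nonpos[OF dW nW, of "-1" p] p by auto
  then have "((x p)^2 + (y p)^2 + E^2) * exp (-K*(p+1)) \<le> ((x (-1))^2 + (y (-1))^2 + E^2)"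
    unfolding W_def by simp
  then have "((x p)^2 + (y p)^2 + E^2) * exp (-K*(p+1)) * exp (K*(p+1)) \<le> ((x (-1))^2 + (y (-1))^2 + E^2) * exp (K*(p+1))"
    by (rule mult_right_mono) simp
  then show "(x p)^2 + (y p)^2 + E^2 \<le> ((x (-1))^2 + (y (-1))^2 + E^2) * exp ((2*L+2)*(p+1))"
  proof -
    have "exp (-K*(p+1)) * exp (K*(p+1)) = 1" by (simp flip: exp_add)
    then show "?thesis" using \<open>((x p)^2 + (y p)^2 + E^2) * exp (-K*(p+1)) * exp (K*(p+1)) \<le> _\<close>
      by (simp add: K_def mult.assoc)
  qed
qed

lemma deriv_transform:
  fixes f g :: "real \<Rightarrow> real"
  assumes "x \<in> S" "\<And>y. y \<in> S \<Longrightarrow> g y = f y" "(f has_real_derivative D) (at x within S)"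
  shows "(g has_real_derivative D) (at x within S)"
  using assms unfolding has_field_derivative_def by (rule has_derivative_transform)

lemma cont_int:
  fixes g :: "real \<Rightarrow> real"
  assumes "continuous_on {-1..0} g"
  shows "continuous_on {-1..0} (\<lambda>p. integral {-1..p} g)"
  by (rule DERIV_continuous_on[OF integral_has_real_derivative[OF assms]])

lemma pow_aux: "real n * y^(n - Suc 0) * (y::real) = real n * y^n" by (cases n) auto

lemma int_pow:
  fixes p :: real
  assumes "-1 \<le> p"
  shows "((\<lambda>s. (s+1)^n) has_integral (p+1)^(Suc n)/Suc n) {-1..p}"
proof -
  have "((\<lambda>s. (s+1)^n) has_integral ((\<lambda>s. (s+1)^(Suc n)/Suc n) p - (\<lambda>s. (s+1)^(Suc n)/Suc n) (-1))) {-1..p}"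
  proof (rule fundamental_theorem_of_calculus[OF assms])
    fix x :: real assume "x \<in> {-1..p}"
    show "((\<lambda>s. (s+1)^(Suc n)/Suc n) has_vector_derivative (x+1)^n) (at x within {-1..p})"
      unfolding has_real_derivative_iff_has_vector_derivative[symmetric]
    proof -
      have d1: "((\<lambda>s. s+1) has_real_derivative 1) (at x within {-1..p})" by (auto intro!: derivative_eq_intros)
      have "((\<lambda>s. (s+1)^(Suc n)) has_real_derivative real (Suc n) * (1 * (x+1)^(Suc n - Suc 0))) (at x within {-1..p})"
        by (rule DERIV_power[OF d1])
      then have "((\<lambda>s. (s+1)^(Suc n) / Suc n) has_real_derivative real (Suc n) * (1 * (x+1)^(Suc n - Suc 0)) / Suc n) (at x within {-1..p})"
        by (rule DERIV_cdivide)
      then show "((\<lambda>s. (s+1)^(Suc n)/Suc n) has_real_derivative (x+1)^n) (at x within {-1..p})"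
        by (simp del: of_nat_Suc)
    qed
  qed
  then show ?thesis by simp
qed

lemma int_step:
  fixes a f g :: "real \<Rightarrow> real"
  assumes ca: "continuous_on {-1..0} a" and cf: "continuous_on {-1..0} f" and cg: "continuous_on {-1..0} g"
    and La: "\<forall>s\<in>{-1..0}. \<bar>a s\<bar> \<le> La"
    and fg: "\<forall>s\<in>{-1..0}. \<bar>f s - g s\<bar> \<le> K*(s+1)^n"
    and p: "p \<in> {-1..0}" and K: "0 \<le> K"
  shows "\<bar>integral {-1..p} (\<lambda>s. a s * f s) - integral {-1..p} (\<lambda>s. a s * g s)\<bar> \<le> La*K*((p+1)^(Suc n)/Suc n)"
proof -
  have sub: "{-1..p} \<subseteq> {-1..0}" using p by auto
  have i1: "(\<lambda>s. a s * f s) integrable_on {-1..p}"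
    by (rule integrable_continuous_interval, rule continuous_on_subset[OF _ sub], intro continuous_intros ca cf)
  have i2: "(\<lambda>s. a s * g s) integrable_on {-1..p}"
    by (rule integrable_continuous_interval, rule continuous_on_subset[OF _ sub], intro continuous_intros ca cg)
  have hi: "((\<lambda>s. La*K*(s+1)^n) has_integral La*K*((p+1)^(Suc n)/Suc n)) {-1..p}"
    using has_integral_mult_right[OF int_pow[of p n], of "La*K"] p by (simp add: mult.assoc)
  have "integral {-1..p} (\<lambda>s. a s * f s) - integral {-1..p} (\<lambda>s. a s * g s) = integral {-1..p} (\<lambda>s. a s * f s - a s * g s)"
    using integral_diff[OF i1 i2] by simp
  also have "\<bar>\<dots>\<bar> \<le> integral {-1..p} (\<lambda>s. La*K*(s+1)^n)"
  proof -
    have "norm (integral {-1..p} (\<lambda>s. a s * f s - a s * g s)) \<le> integral {-1..p} (\<lambda>s. La*K*(s+1)^n)"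
    proof (rule integral_norm_bound_integral)
      show "(\<lambda>s. a s * f s - a s * g s) integrable_on {-1..p}" using i1 i2 by (rule integrable_diff)
      show "(\<lambda>s. La*K*(s+1)^n) integrable_on {-1..p}" using hi by blast
      fix s assume s: "s \<in> {-1..p}"
      then have s0: "s \<in> {-1..0}" using sub by auto
      have "\<bar>a s * f s - a s * g s\<bar> = \<bar>a s\<bar> * \<bar>f s - g s\<bar>" by (simp add: abs_mult flip: right_diff_distrib)
      also have "\<dots> \<le> La * (K*(s+1)^n)"
        by (rule mult_mono) (use La fg s0 in auto)
      finally show "norm (a s * f s - a s * g s) \<le> La*K*(s+1)^n" by (simp add: mult.assoc)
    qed
    then show ?thesis by simp
  qed
  also have "\<dots> = La*K*((p+1)^(Suc n)/Suc n)" using hi by (rule integral_unique)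
  finally show ?thesis .
qed

primrec pic :: "(real \<Rightarrow> real) \<Rightarrow> (real \<Rightarrow> real) \<Rightarrow> real \<Rightarrow> nat \<Rightarrow> (real \<Rightarrow> real) \<times> (real \<Rightarrow> real)" where
  "pic a b c 0 = (\<lambda>_. 0, \<lambda>_. 0)"
| "pic a b c (Suc n) = (\<lambda>p. integral {-1..p} (\<lambda>s. a s * snd (pic a b c n) s),
                        \<lambda>p. c + integral {-1..p} (\<lambda>s. b s * fst (pic a b c n) s))"

lemma pic_cont:
  assumes ca: "continuous_on {-1..0} a" and cb: "continuous_on {-1..0} b"
  shows "continuous_on {-1..0} (fst (pic a b c n)) \<and> continuous_on {-1..0} (snd (pic a b c n))"
proof (induction n)
  case 0 then show ?case by (simp add: continuous_on_const)
next
  case (Suc n)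
  have 1: "continuous_on {-1..0} (\<lambda>p. integral {-1..p} (\<lambda>s. a s * snd (pic a b c n) s))"
    by (rule cont_int) (use Suc ca in \<open>auto intro!: continuous_intros\<close>)
  have 2: "continuous_on {-1..0} (\<lambda>p. integral {-1..p} (\<lambda>s. b s * fst (pic a b c n) s))"
    by (rule cont_int) (use Suc cb in \<open>auto intro!: continuous_intros\<close>)
  show ?case using 1 2 by (auto intro!: continuous_intros)
qed

lemma pic_bound:
  assumes ca: "continuous_on {-1..0} a" and cb: "continuous_on {-1..0} b"
    and La: "\<forall>s\<in>{-1..0}. \<bar>a s\<bar> \<le> L" and Lb: "\<forall>s\<in>{-1..0}. \<bar>b s\<bar> \<le> L" and L: "0 \<le> L"
  shows "\<forall>p\<in>{-1..0}. \<bar>fst (pic a b c (Suc n)) p - fst (pic a b c n) p\<bar> \<le> (\<bar>c\<bar>+1)*L^n/fact n*(p+1)^n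
       \<and> \<bar>snd (pic a b c (Suc n)) p - snd (pic a b c n) p\<bar> \<le> (\<bar>c\<bar>+1)*L^n/fact n*(p+1)^n"
proof (induction n)
  case 0 then show ?case by simp
next
  case (Suc n)
  define K where "K = (\<bar>c\<bar>+1)*L^n/fact n"
  have K: "0 \<le> K" unfolding K_def using L by simp
  have eq: "L*K*((p+1)^(Suc n)/Suc n) = (\<bar>c\<bar>+1)*L^Suc n/fact (Suc n)*(p+1)^Suc n" for p :: real
    unfolding K_def by (simp add: field_simps del: of_nat_Suc)
  note cc = pic_cont[OF ca cb]
  show ?case
  proof
    fix p :: real assume p: "p \<in> {-1..0}"
    have s1: "\<forall>s\<in>{-1..0}. \<bar>snd (pic a b c (Suc n)) s - snd (pic a b c n) s\<bar> \<le> K*(s+1)^n"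
      using Suc unfolding K_def by auto
    have s2: "\<forall>s\<in>{-1..0}. \<bar>fst (pic a b c (Suc n)) s - fst (pic a b c n) s\<bar> \<le> K*(s+1)^n"
      using Suc unfolding K_def by auto
    have "\<bar>fst (pic a b c (Suc (Suc n))) p - fst (pic a b c (Suc n)) p\<bar> \<le> L*K*((p+1)^(Suc n)/Suc n)"
      using int_step[OF ca conjunct2[OF cc] conjunct2[OF cc] La s1 p K] by simp
    moreover have "\<bar>snd (pic a b c (Suc (Suc n))) p - snd (pic a b c (Suc n)) p\<bar> \<le> L*K*((p+1)^(Suc n)/Suc n)"
      using int_step[OF cb conjunct1[OF cc] conjunct1[OF cc] Lb s2 p K] by simp
    ultimately show "\<bar>fst (pic a b c (Suc (Suc n))) p - fst (pic a b c (Suc n)) p\<bar> \<le> (\<bar>c\<bar>+1)*L^Suc n/fact (Suc n)*(p+1)^Suc n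
       \<and> \<bar>snd (pic a b c (Suc (Suc n))) p - snd (pic a b c (Suc n)) p\<bar> \<le> (\<bar>c\<bar>+1)*L^Suc n/fact (Suc n)*(p+1)^Suc n"
      by (simp only: eq)
  qed
qed

lemma cont_bounded:
  fixes f :: "real \<Rightarrow> real"
  assumes "continuous_on {-1..0} f"
  shows "bounded (f ` {-1..0})" "\<exists>M. \<forall>s\<in>{-1..0}. \<bar>f s\<bar> \<le> M"
proof -
  show b: "bounded (f ` {-1..0})" by (rule compact_imp_bounded, rule compact_continuous_image[OF assms]) simp
  then show "\<exists>M. \<forall>s\<in>{-1..0}. \<bar>f s\<bar> \<le> M" unfolding Elementary_Metric_Spaces.bounded_iff by auto
qed

lemma pic_exists:
  fixes a b :: "real \<Rightarrow> real" and c :: real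
  assumes ca: "continuous_on {-1..0} a" and cb: "continuous_on {-1..0} b"
  shows "\<exists>x y. x (-1) = 0 \<and> y (-1) = c \<and>
     (\<forall>p\<in>{-1..0}. (x has_real_derivative a p * y p) (at p within {-1..0})) \<and>
     (\<forall>p\<in>{-1..0}. (y has_real_derivative b p * x p) (at p within {-1..0}))"
proof -
  obtain Ma where Ma: "\<forall>s\<in>{-1..0}. \<bar>a s\<bar> \<le> Ma" using cont_bounded(2)[OF ca] by blast
  obtain Mb where Mb: "\<forall>s\<in>{-1..0}. \<bar>b s\<bar> \<le> Mb" using cont_bounded(2)[OF cb] by blast
  define L where "L = \<bar>Ma\<bar> + \<bar>Mb\<bar>"
  have L0: "0 \<le> L" unfolding L_def by simp
  have La: "\<forall>s\<in>{-1..0}. \<bar>a s\<bar> \<le> L" using Ma unfolding L_def by force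
  have Lb: "\<forall>s\<in>{-1..0}. \<bar>b s\<bar> \<le> L" using Mb unfolding L_def by force
  define F where "F = (\<lambda>n. fst (pic a b c n))"
  define G where "G = (\<lambda>n. snd (pic a b c n))"
  define M where "M = (\<lambda>k. (\<bar>c\<bar>+1)*L^k/fact k)"
  have summ: "summable M"
  proof -
    have "summable (\<lambda>k. (\<bar>c\<bar>+1) * (inverse (fact k) * L^k))" by (rule summable_mult, rule summable_exp)
    then show ?thesis unfolding M_def by (simp add: field_simps)
  qed
  note pb = pic_bound[OF ca cb La Lb L0, of c]
  have bF: "norm (F (Suc k) x - F k x) \<le> M k" if x: "x \<in> {-1..0}" for k x
  proof -
    have "(x+1)^k \<le> 1" using x by (intro power_le_one) auto
    then have "(\<bar>c\<bar>+1)*L^k/fact k*(x+1)^k \<le> (\<bar>c\<bar>+1)*L^k/fact k * 1"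
      by (intro mult_left_mono) (use L0 in auto)
    then show ?thesis using pb[of k] x unfolding F_def M_def by force
  qed
  have bG: "norm (G (Suc k) x - G k x) \<le> M k" if x: "x \<in> {-1..0}" for k x
  proof -
    have "(x+1)^k \<le> 1" using x by (intro power_le_one) auto
    then have "(\<bar>c\<bar>+1)*L^k/fact k*(x+1)^k \<le> (\<bar>c\<bar>+1)*L^k/fact k * 1"
      by (intro mult_left_mono) (use L0 in auto)
    then show ?thesis using pb[of k] x unfolding G_def M_def by force
  qed
  have teleF: "(\<lambda>n x. \<Sum>i<n. F (Suc i) x - F i x) = F"
    by (rule ext, rule ext, subst sum_lessThan_telescope) (simp add: F_def)
  have teleG: "(\<lambda>n x. \<Sum>i<n. G (Suc i) x - G i x) = G"
    by (rule ext, rule ext, subst sum_lessThan_telescope) (simp add: G_def)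
  define X where "X = (\<lambda>x. suminf (\<lambda>i. F (Suc i) x - F i x))"
  define Y where "Y = (\<lambda>x. suminf (\<lambda>i. G (Suc i) x - G i x))"
  have uF: "uniform_limit {-1..0} F X sequentially"
    using Weierstrass_m_test[where f="\<lambda>i x. F (Suc i) x - F i x" and A="{-1..0}" and M=M, OF bF summ] unfolding teleF X_def by simp
  have uG: "uniform_limit {-1..0} G Y sequentially"
    using Weierstrass_m_test[where f="\<lambda>i x. G (Suc i) x - G i x" and A="{-1..0}" and M=M, OF bG summ] unfolding teleG Y_def by simp
  note cc = pic_cont[OF ca cb, of c]
  have cX: "continuous_on {-1..0} X"
    by (rule uniform_limit_theorem[OF _ uF]) (use cc in \<open>auto simp: F_def\<close>)
  have cY: "continuous_on {-1..0} Y"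
    by (rule uniform_limit_theorem[OF _ uG]) (use cc in \<open>auto simp: G_def\<close>)
  have Xeq: "X p = integral {-1..p} (\<lambda>s. a s * Y s)" if p: "p \<in> {-1..0}" for p
  proof -
    have sub: "{-1..p} \<subseteq> {-1..0}" using p by auto
    have u: "uniform_limit {-1..p} (\<lambda>n s. a s * G n s) (\<lambda>s. a s * Y s) sequentially"
    proof (rule uniform_lim_mult)
      show "uniform_limit {-1..p} (\<lambda>n. a) a sequentially" by (rule uniform_limit_const)
      show "uniform_limit {-1..p} G Y sequentially" by (rule uniform_limit_on_subset[OF uG sub])
      show "bounded (a ` {-1..p})" by (rule bounded_subset[OF cont_bounded(1)[OF ca]]) (use sub in auto)
      show "bounded (Y ` {-1..p})" by (rule bounded_subset[OF cont_bounded(1)[OF cY]]) (use sub in auto)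
    qed
    obtain I J where IJ: "\<And>n. ((\<lambda>s. a s * G n s) has_integral I n) {-1..p}"
      "((\<lambda>s. a s * Y s) has_integral J) {-1..p}" "I \<longlonglongrightarrow> J"
    proof (rule uniform_limit_integral[OF u])
      fix n show "continuous_on {-1..p} (\<lambda>s. a s * G n s)"
        by (rule continuous_on_subset[OF _ sub]) (use cc ca in \<open>auto intro!: continuous_intros simp: G_def\<close>)
    qed auto
    have "(\<lambda>n. F (Suc n) p) \<longlonglongrightarrow> X p" using tendsto_uniform_limitI[OF uF p] by (rule LIMSEQ_Suc)
    moreover have "(\<lambda>n. F (Suc n) p) = I" using IJ(1) by (auto simp: F_def G_def integral_unique)
    ultimately have "X p = J" using IJ(3) LIMSEQ_unique by auto
    then show ?thesis using IJ(2) by (simp add: integral_unique)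
  qed
  have Yeq: "Y p = c + integral {-1..p} (\<lambda>s. b s * X s)" if p: "p \<in> {-1..0}" for p
  proof -
    have sub: "{-1..p} \<subseteq> {-1..0}" using p by auto
    have u: "uniform_limit {-1..p} (\<lambda>n s. b s * F n s) (\<lambda>s. b s * X s) sequentially"
    proof (rule uniform_lim_mult)
      show "uniform_limit {-1..p} (\<lambda>n. b) b sequentially" by (rule uniform_limit_const)
      show "uniform_limit {-1..p} F X sequentially" by (rule uniform_limit_on_subset[OF uF sub])
      show "bounded (b ` {-1..p})" by (rule bounded_subset[OF cont_bounded(1)[OF cb]]) (use sub in auto)
      show "bounded (X ` {-1..p})" by (rule bounded_subset[OF cont_bounded(1)[OF cX]]) (use sub in auto)
    qed
    obtain I J where IJ: "\<And>n. ((\<lambda>s. b s * F n s) has_integral I n) {-1..p}"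
      "((\<lambda>s. b s * X s) has_integral J) {-1..p}" "I \<longlonglongrightarrow> J"
    proof (rule uniform_limit_integral[OF u])
      fix n show "continuous_on {-1..p} (\<lambda>s. b s * F n s)"
        by (rule continuous_on_subset[OF _ sub]) (use cc cb in \<open>auto intro!: continuous_intros simp: F_def\<close>)
    qed auto
    have "(\<lambda>n. G (Suc n) p) \<longlonglongrightarrow> Y p" using tendsto_uniform_limitI[OF uG p] by (rule LIMSEQ_Suc)
    moreover have "(\<lambda>n. G (Suc n) p) = (\<lambda>n. c + I n)" using IJ(1) by (auto simp: F_def G_def integral_unique)
    moreover have "(\<lambda>n. c + I n) \<longlonglongrightarrow> c + J" using IJ(3) by (intro tendsto_intros)
    ultimately have "Y p = c + J" using LIMSEQ_unique by auto
    then show ?thesis using IJ(2) by (simp add: integral_unique)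
  qed
  show ?thesis
  proof (intro exI conjI ballI)
    show "X (-1) = 0" using Xeq[of "-1"] by simp
    show "Y (-1) = c" using Yeq[of "-1"] by simp
    fix p :: real assume p: "p \<in> {-1..0}"
    show "(X has_real_derivative a p * Y p) (at p within {-1..0})"
      by (rule deriv_transform[OF p Xeq integral_has_real_derivative]) (use ca cY p in \<open>auto intro!: continuous_intros\<close>)
    show "(Y has_real_derivative b p * X p) (at p within {-1..0})"
    proof -
      have d: "((\<lambda>q. integral {-1..q} (\<lambda>s. b s * X s)) has_real_derivative b p * X p) (at p within {-1..0})"
        by (rule integral_has_real_derivative) (use cb cX p in \<open>auto intro!: continuous_intros\<close>)
      have "((\<lambda>q. c + integral {-1..q} (\<lambda>s. b s * X s)) has_real_derivative 0 + b p * X p) (at p within {-1..0})"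
        by (intro DERIV_add DERIV_const d)
      then show ?thesis by (intro deriv_transform[OF p Yeq]) auto
    qed
  qed
qed

lemma sq_bound:
  fixes x y B :: real
  assumes "x^2 + y^2 \<le> B^2" "0 \<le> B"
  shows "\<bar>x\<bar> \<le> B" "\<bar>y\<bar> \<le> B"
proof -
  have "x^2 \<le> B^2" "y^2 \<le> B^2" using assms(1) zero_le_power2[of x] zero_le_power2[of y] by linarith+
  then show "\<bar>x\<bar> \<le> B" "\<bar>y\<bar> \<le> B" using abs_le_square_iff[of x B] abs_le_square_iff[of y B] assms(2) by auto
qed

locale setting =
  fixes rho rhop Hp :: "real \<Rightarrow> real"
  assumes cHp: "continuous_on {-1..0} Hp" and crhop: "continuous_on {-1..0} rhop"
    and Hp_pos: "\<forall>x\<in>{-1..0}. Hp x > 0" and rho0: "rho 0 > 0"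
    and rhop_nonpos: "\<forall>x\<in>{-1..0}. rhop x \<le> 0"
begin

definition "Ka = (SOME K. K \<ge> 0 \<and> (\<forall>s\<in>{-1..0}. \<bar>Hp s ^ 3\<bar> \<le> K))"
definition "Kr = (SOME K. K \<ge> 0 \<and> (\<forall>s\<in>{-1..0}. \<bar>rhop s\<bar> \<le> K))"

lemma Ka: "Ka \<ge> 0" "\<forall>s\<in>{-1..0}. \<bar>Hp s ^ 3\<bar> \<le> Ka"
proof -
  have "continuous_on {-1..0} (\<lambda>s. Hp s ^ 3)" using cHp by (intro continuous_intros)
  then obtain K where K: "\<forall>s\<in>{-1..0}. \<bar>Hp s ^ 3\<bar> \<le> K" using cont_bounded(2) by blast
  then have "\<exists>K. K \<ge> 0 \<and> (\<forall>s\<in>{-1..0}. \<bar>Hp s ^ 3\<bar> \<le> K)"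
    by (intro exI[of _ "\<bar>K\<bar>"]) force
  from someI_ex[OF this] show "Ka \<ge> 0" "\<forall>s\<in>{-1..0}. \<bar>Hp s ^ 3\<bar> \<le> Ka" unfolding Ka_def by auto
qed

lemma Kr: "Kr \<ge> 0" "\<forall>s\<in>{-1..0}. \<bar>rhop s\<bar> \<le> Kr"
proof -
  obtain K where K: "\<forall>s\<in>{-1..0}. \<bar>rhop s\<bar> \<le> K" using cont_bounded(2)[OF crhop] by blast
  then have "\<exists>K. K \<ge> 0 \<and> (\<forall>s\<in>{-1..0}. \<bar>rhop s\<bar> \<le> K)"
    by (intro exI[of _ "\<bar>K\<bar>"]) force
  from someI_ex[OF this] show "Kr \<ge> 0" "\<forall>s\<in>{-1..0}. \<bar>rhop s\<bar> \<le> Kr" unfolding Kr_def by auto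
qed

lemma is_Phi_unique:
  assumes P1: "is_Phi Hp rhop mu P1 P1'" and P2: "is_Phi Hp rhop mu P2 P2'" and p: "p \<in> {-1..0}"
  shows "P1 p = P2 p \<and> P1' p = P2' p"
proof -
  define x where "x = (\<lambda>q. P1 q - P2 q)"
  define y where "y = (\<lambda>q. P1' q / Hp q ^ 3 - P2' q / Hp q ^ 3)"
  define L where "L = Ka + \<bar>mu\<bar> * Kr"
  have L: "0 \<le> L" unfolding L_def using Ka Kr by simp
  have dx: "\<forall>q\<in>{-1..0}. (x has_real_derivative P1' q - P2' q) (at q within {-1..0})"
  proof
    fix q :: real assume q: "q \<in> {-1..0}"
    show "(x has_real_derivative P1' q - P2' q) (at q within {-1..0})"
      unfolding x_def using P1 P2 q unfolding is_Phi_def by (intro DERIV_diff) auto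
  qed
  have dy: "\<forall>q\<in>{-1..0}. (y has_real_derivative mu * rhop q * P1 q - mu * rhop q * P2 q) (at q within {-1..0})"
  proof
    fix q :: real assume q: "q \<in> {-1..0}"
    show "(y has_real_derivative mu * rhop q * P1 q - mu * rhop q * P2 q) (at q within {-1..0})"
      unfolding y_def using P1 P2 q unfolding is_Phi_def by (intro DERIV_diff) auto
  qed
  have bx: "\<forall>q\<in>{-1..0}. \<bar>P1' q - P2' q\<bar> \<le> L * \<bar>y q\<bar> + 0"
  proof
    fix q :: real assume q: "q \<in> {-1..0}"
    have h: "Hp q ^ 3 > 0" using Hp_pos q by simp
    have "P1' q - P2' q = Hp q ^ 3 * y q" unfolding y_def using h by (simp add: field_simps)
    then have "\<bar>P1' q - P2' q\<bar> = \<bar>Hp q ^ 3\<bar> * \<bar>y q\<bar>" by (simp add: abs_mult)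
    also have "\<dots> \<le> L * \<bar>y q\<bar>"
    proof (rule mult_right_mono)
      have "0 \<le> \<bar>mu\<bar> * Kr" using Kr by simp
      then show "\<bar>Hp q ^ 3\<bar> \<le> L" using Ka(2) q unfolding L_def by fastforce
    qed simp
    finally show "\<bar>P1' q - P2' q\<bar> \<le> L * \<bar>y q\<bar> + 0" by simp
  qed
  have byy: "\<forall>q\<in>{-1..0}. \<bar>mu * rhop q * P1 q - mu * rhop q * P2 q\<bar> \<le> L * \<bar>x q\<bar> + 0"
  proof
    fix q :: real assume q: "q \<in> {-1..0}"
    have "mu * rhop q * P1 q - mu * rhop q * P2 q = (mu * rhop q) * x q" unfolding x_def by (simp add: algebra_simps)
    then have "\<bar>mu * rhop q * P1 q - mu * rhop q * P2 q\<bar> = \<bar>mu\<bar> * \<bar>rhop q\<bar> * \<bar>x q\<bar>" by (simp add: abs_mult)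
    also have "\<dots> \<le> L * \<bar>x q\<bar>"
    proof (rule mult_right_mono)
      have "\<bar>mu\<bar> * \<bar>rhop q\<bar> \<le> \<bar>mu\<bar> * Kr" using Kr(2) q by (intro mult_left_mono) auto
      then show "\<bar>mu\<bar> * \<bar>rhop q\<bar> \<le> L" using Ka(1) unfolding L_def by linarith
    qed simp
    finally show "\<bar>mu * rhop q * P1 q - mu * rhop q * P2 q\<bar> \<le> L * \<bar>x q\<bar> + 0" by simp
  qed
  have "(x p)^2 + (y p)^2 + 0^2 \<le> ((x (-1))^2 + (y (-1))^2 + 0^2) * exp ((2*L+2)*(p+1))"
    using energy[OF dx dy bx byy L] p by auto
  moreover have "x (-1) = 0" "y (-1) = 0" using P1 P2 unfolding is_Phi_def x_def y_def by auto
  ultimately have "(x p)^2 + (y p)^2 \<le> 0" by simp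
  then have "(x p)^2 = 0" "(y p)^2 = 0" using zero_le_power2[of "x p"] zero_le_power2[of "y p"] by linarith+
  then have "x p = 0" "y p = 0" by simp_all
  moreover have "Hp p ^ 3 > 0" using Hp_pos p by simp
  ultimately show ?thesis unfolding x_def y_def by (auto simp: field_simps)
qed

lemma is_Phi_exists:
  "\<exists>P P'. is_Phi Hp rhop mu P P' \<and> (\<forall>x. x \<notin> {-1..0} \<longrightarrow> P x = 0 \<and> P' x = 0)"
proof -
  have ca: "continuous_on {-1..0} (\<lambda>s. Hp s ^ 3)" using cHp by (intro continuous_intros)
  have cb: "continuous_on {-1..0} (\<lambda>s. mu * rhop s)" using crhop by (intro continuous_intros)
  obtain X Y where XY: "X (-1) = 0" "Y (-1) = 1 / Hp (-1) ^ 3"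
     "\<forall>p\<in>{-1..0}. (X has_real_derivative Hp p ^ 3 * Y p) (at p within {-1..0})"
     "\<forall>p\<in>{-1..0}. (Y has_real_derivative mu * rhop p * X p) (at p within {-1..0})"
    using pic_exists[OF ca cb, of "1 / Hp (-1) ^ 3"] by blast
  define P where "P = (\<lambda>p. if p \<in> {-1..0} then X p else 0)"
  define P' where "P' = (\<lambda>p. if p \<in> {-1..0} then Hp p ^ 3 * Y p else 0)"
  have h1: "Hp (-1) > 0" using Hp_pos by auto
  have "is_Phi Hp rhop mu P P'"
    unfolding is_Phi_def
  proof (intro conjI ballI)
    show "P (-1) = 0" using XY unfolding P_def by simp
    show "P' (-1) = 1" using XY h1 unfolding P'_def by simp
    fix x :: real assume x: "x \<in> {-1..0}"
    have "(X has_real_derivative Hp x ^ 3 * Y x) (at x within {-1..0})" using XY(3) x by blast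
    then have d1: "(X has_real_derivative P' x) (at x within {-1..0})" using x by (simp add: P'_def)
    have e1: "P y = X y" if "y \<in> {-1..0}" for y using that by (simp add: P_def)
    show "(P has_real_derivative P' x) (at x within {-1..0})" by (rule deriv_transform[OF x e1 d1])
    have "(Y has_real_derivative mu * rhop x * X x) (at x within {-1..0})" using XY(4) x by blast
    then have d2: "(Y has_real_derivative mu * rhop x * P x) (at x within {-1..0})" using x by (simp add: P_def)
    have e2: "P' y / Hp y ^ 3 = Y y" if "y \<in> {-1..0}" for y
    proof -
      have "Hp y \<noteq> 0" using Hp_pos that by fastforce
      then show ?thesis using that by (simp add: P'_def)
    qed
    show "((\<lambda>p. P' p / Hp p ^ 3) has_real_derivative mu * rhop x * P x) (at x within {-1..0})"
      by (rule deriv_transform[OF x e2 d2])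
  qed
  moreover have "\<forall>x. x \<notin> {-1..0} \<longrightarrow> P x = 0 \<and> P' x = 0" unfolding P_def P'_def by auto
  ultimately show ?thesis by blast
qed

lemma Phi_is_Phi: "is_Phi Hp rhop mu (Phi Hp rhop mu) (Phi_p Hp rhop mu)"
proof -
  let ?Q = "\<lambda>(P, P'). is_Phi Hp rhop mu P P' \<and> (\<forall>x. x \<notin> {-1..0} \<longrightarrow> P x = 0 \<and> P' x = 0)"
  have ex1: "\<exists>!z. ?Q z"
  proof -
    obtain P P' where PP: "?Q (P, P')" using is_Phi_exists[of mu] by auto
    moreover have "z = (P, P')" if "?Q z" for z
    proof (cases z)
      case (Pair Q Q')
      with that have Q: "is_Phi Hp rhop mu Q Q'" "\<forall>x. x \<notin> {-1..0} \<longrightarrow> Q x = 0 \<and> Q' x = 0" by auto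
      have PP': "is_Phi Hp rhop mu P P'" "\<forall>x. x \<notin> {-1..0} \<longrightarrow> P x = 0 \<and> P' x = 0" using PP by auto
      have e: "Q x = P x \<and> Q' x = P' x" for x
      proof (cases "x \<in> {-1..0}")
        case True then show ?thesis using is_Phi_unique[OF Q(1) PP'(1)] by blast
      next
        case False then show ?thesis using Q(2) PP'(2) by simp
      qed
      have "Q = P" "Q' = P'" using e by auto
      then show ?thesis using Pair by simp
    qed
    ultimately show ?thesis by blast
  qed
  have "?Q (Phi_pair Hp rhop mu)" unfolding Phi_pair_def by (rule theI'[OF ex1])
  then show ?thesis unfolding Phi_def Phi_p_def by (simp add: case_prod_beta)
qed

end

context setting begin

definition "uu mu p = Phi_p Hp rhop mu p / Hp p ^ 3"
definition "c0 = 1 / Hp (-1) ^ 3"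
definition "LL M = Ka + M * Kr"
definition "KK M = 2 * LL M + 2"
definition "XB M = (c0 + 1) * exp (KK M)"
definition "CL M = Kr * XB M * exp (KK M)"
definition "CA M = CL M + rho 0 * M * CL M + rho 0 * XB M"

lemma c0_pos: "c0 > 0" unfolding c0_def using Hp_pos by auto

lemma Hp3_pos: "p \<in> {-1..0} \<Longrightarrow> Hp p ^ 3 > 0" using Hp_pos by auto

lemma dPhi: "p \<in> {-1..0} \<Longrightarrow> (Phi Hp rhop mu has_real_derivative Hp p ^ 3 * uu mu p) (at p within {-1..0})"
proof -
  assume p: "p \<in> {-1..0}"
  have "Hp p ^ 3 * uu mu p = Phi_p Hp rhop mu p" using Hp3_pos[OF p] unfolding uu_def by simp
  then show ?thesis using Phi_is_Phi[of mu] p unfolding is_Phi_def by simp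
qed

lemma duu: "p \<in> {-1..0} \<Longrightarrow> (uu mu has_real_derivative mu * rhop p * Phi Hp rhop mu p) (at p within {-1..0})"
proof -
  assume p: "p \<in> {-1..0}"
  have "\<forall>x\<in>{-1..0}. ((\<lambda>p. Phi_p Hp rhop mu p / Hp p ^ 3) has_real_derivative mu * rhop x * Phi Hp rhop mu x) (at x within {-1..0})"
    using Phi_is_Phi[of mu] unfolding is_Phi_def by blast
  then have d: "((\<lambda>p. Phi_p Hp rhop mu p / Hp p ^ 3) has_real_derivative mu * rhop p * Phi Hp rhop mu p) (at p within {-1..0})"
    using p by blast
  show ?thesis by (rule deriv_transform[OF p _ d]) (simp add: uu_def)
qed

lemma init: "Phi Hp rhop mu (-1) = 0" "uu mu (-1) = c0"
  using Phi_is_Phi[of mu] unfolding is_Phi_def uu_def c0_def by auto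

lemma Aeq: "A_fun Hp rho rhop mu = - uu mu 0 + mu * rho 0 * Phi Hp rhop mu 0"
  unfolding A_fun_def uu_def by simp

lemma LL_nonneg: "0 \<le> M \<Longrightarrow> 0 \<le> LL M" unfolding LL_def using Ka Kr by simp

lemma a_bound: "p \<in> {-1..0} \<Longrightarrow> 0 \<le> M \<Longrightarrow> \<bar>Hp p ^ 3 * z\<bar> \<le> LL M * \<bar>z\<bar>"
proof -
  assume p: "p \<in> {-1..0}" and M: "0 \<le> M"
  have "\<bar>Hp p ^ 3\<bar> \<le> Ka" using Ka(2) p by blast
  moreover have "0 \<le> M * Kr" using Kr(1) M by simp
  ultimately have "\<bar>Hp p ^ 3\<bar> \<le> LL M" unfolding LL_def by linarith
  then show ?thesis by (simp add: abs_mult mult_right_mono)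
qed

lemma b_bound: "p \<in> {-1..0} \<Longrightarrow> 0 \<le> mu \<Longrightarrow> mu \<le> M \<Longrightarrow> \<bar>mu * rhop p * z\<bar> \<le> LL M * \<bar>z\<bar>"
proof -
  assume p: "p \<in> {-1..0}" and mu: "0 \<le> mu" "mu \<le> M"
  have "\<bar>mu * rhop p\<bar> = mu * \<bar>rhop p\<bar>" using mu by (simp add: abs_mult)
  also have "\<dots> \<le> M * Kr" using Kr p mu by (intro mult_mono) auto
  also have "\<dots> \<le> LL M" unfolding LL_def using Ka by simp
  finally show ?thesis by (simp add: abs_mult mult_right_mono)
qed

lemma sol_bound:
  assumes mu: "0 \<le> mu" "mu \<le> M" and p: "p \<in> {-1..0}"
  shows "\<bar>Phi Hp rhop mu p\<bar> \<le> XB M" "\<bar>uu mu p\<bar> \<le> XB M"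
proof -
  have M: "0 \<le> M" using mu by simp
  have dx: "\<forall>q\<in>{-1..0}. (Phi Hp rhop mu has_real_derivative Hp q ^ 3 * uu mu q) (at q within {-1..0})"
    using dPhi by blast
  have dy: "\<forall>q\<in>{-1..0}. (uu mu has_real_derivative mu * rhop q * Phi Hp rhop mu q) (at q within {-1..0})"
    using duu by blast
  have bx: "\<forall>q\<in>{-1..0}. \<bar>Hp q ^ 3 * uu mu q\<bar> \<le> LL M * \<bar>uu mu q\<bar> + 0" using a_bound[OF _ M] by simp
  have byy: "\<forall>q\<in>{-1..0}. \<bar>mu * rhop q * Phi Hp rhop mu q\<bar> \<le> LL M * \<bar>Phi Hp rhop mu q\<bar> + 0"
    using b_bound[OF _ mu] by simp
  have "(Phi Hp rhop mu p)^2 + (uu mu p)^2 + 0^2 \<le> (0^2 + c0^2 + 0^2) * exp ((2 * LL M + 2) * (p+1))"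
    using energy[OF dx dy bx byy LL_nonneg[OF M]] p init by auto
  also have "\<dots> \<le> c0^2 * exp (KK M)"
  proof -
    have "(2 * LL M + 2) * (p+1) \<le> 2 * LL M + 2" using p LL_nonneg[OF M] by (intro mult_left_le) auto
    then show ?thesis unfolding KK_def by (simp add: mult_left_mono)
  qed
  also have "\<dots> \<le> (XB M)^2"
  proof -
    have e1: "1 \<le> exp (KK M)" unfolding KK_def using LL_nonneg[OF M] by simp
    have "c0^2 \<le> (c0+1)^2" using c0_pos by (intro power_mono) auto
    moreover have "exp (KK M) \<le> exp (KK M)^2" using e1 by (simp add: power2_eq_square)
    ultimately show ?thesis unfolding XB_def power_mult_distrib by (intro mult_mono) auto
  qed
  finally have "(Phi Hp rhop mu p)^2 + (uu mu p)^2 \<le> (XB M)^2" by simp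
  moreover have "0 \<le> XB M" unfolding XB_def using c0_pos by simp
  ultimately show "\<bar>Phi Hp rhop mu p\<bar> \<le> XB M" "\<bar>uu mu p\<bar> \<le> XB M" using sq_bound by auto
qed

lemma CL_nonneg: "0 \<le> M \<Longrightarrow> 0 \<le> CL M" unfolding CL_def XB_def using Kr c0_pos by simp

lemma lip:
  assumes mu: "0 \<le> mu" "mu \<le> M" and nu: "0 \<le> nu" "nu \<le> M" and p: "p \<in> {-1..0}"
  shows "\<bar>Phi Hp rhop mu p - Phi Hp rhop nu p\<bar> \<le> CL M * \<bar>mu - nu\<bar>"
        "\<bar>uu mu p - uu nu p\<bar> \<le> CL M * \<bar>mu - nu\<bar>"
proof -
  have M: "0 \<le> M" using mu by simp
  define x where "x = (\<lambda>q. Phi Hp rhop mu q - Phi Hp rhop nu q)"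
  define y where "y = (\<lambda>q. uu mu q - uu nu q)"
  define E where "E = \<bar>mu - nu\<bar> * Kr * XB M"
  have E: "0 \<le> E" unfolding E_def XB_def using Kr c0_pos by simp
  have dx: "\<forall>q\<in>{-1..0}. (x has_real_derivative Hp q ^ 3 * y q) (at q within {-1..0})"
  proof
    fix q :: real assume q: "q \<in> {-1..0}"
    have "(x has_real_derivative Hp q ^ 3 * uu mu q - Hp q ^ 3 * uu nu q) (at q within {-1..0})"
      unfolding x_def by (intro DERIV_diff dPhi q)
    then show "(x has_real_derivative Hp q ^ 3 * y q) (at q within {-1..0})"
      unfolding y_def by (simp add: algebra_simps)
  qed
  have dy: "\<forall>q\<in>{-1..0}. (y has_real_derivative mu * rhop q * x q + (mu - nu) * rhop q * Phi Hp rhop nu q) (at q within {-1..0})"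
  proof
    fix q :: real assume q: "q \<in> {-1..0}"
    have "(y has_real_derivative mu * rhop q * Phi Hp rhop mu q - nu * rhop q * Phi Hp rhop nu q) (at q within {-1..0})"
      unfolding y_def by (intro DERIV_diff duu q)
    then show "(y has_real_derivative mu * rhop q * x q + (mu - nu) * rhop q * Phi Hp rhop nu q) (at q within {-1..0})"
      unfolding x_def by (simp add: algebra_simps)
  qed
  have bx: "\<forall>q\<in>{-1..0}. \<bar>Hp q ^ 3 * y q\<bar> \<le> LL M * \<bar>y q\<bar> + E"
  proof
    fix q :: real assume q: "q \<in> {-1..0}"
    show "\<bar>Hp q ^ 3 * y q\<bar> \<le> LL M * \<bar>y q\<bar> + E" using a_bound[OF q M, of "y q"] E by linarith
  qed
  have byy: "\<forall>q\<in>{-1..0}. \<bar>mu * rhop q * x q + (mu - nu) * rhop q * Phi Hp rhop nu q\<bar> \<le> LL M * \<bar>x q\<bar> + E"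
  proof
    fix q :: real assume q: "q \<in> {-1..0}"
    have 1: "\<bar>mu * rhop q * x q\<bar> \<le> LL M * \<bar>x q\<bar>" by (rule b_bound[OF q mu])
    have "\<bar>(mu - nu) * rhop q * Phi Hp rhop nu q\<bar> = \<bar>mu - nu\<bar> * \<bar>rhop q\<bar> * \<bar>Phi Hp rhop nu q\<bar>"
      by (simp add: abs_mult)
    also have "\<dots> \<le> \<bar>mu - nu\<bar> * Kr * XB M"
    proof -
      have "\<bar>rhop q\<bar> \<le> Kr" using Kr(2) q by blast
      then have a1: "\<bar>mu - nu\<bar> * \<bar>rhop q\<bar> \<le> \<bar>mu - nu\<bar> * Kr" by (rule mult_left_mono) simp
      show ?thesis by (rule mult_mono[OF a1 sol_bound(1)[OF nu q]]) (use Kr(1) in auto)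
    qed
    finally have 2: "\<bar>(mu - nu) * rhop q * Phi Hp rhop nu q\<bar> \<le> E" unfolding E_def .
    show "\<bar>mu * rhop q * x q + (mu - nu) * rhop q * Phi Hp rhop nu q\<bar> \<le> LL M * \<bar>x q\<bar> + E"
      using 1 2 abs_triangle_ineq[of "mu * rhop q * x q" "(mu - nu) * rhop q * Phi Hp rhop nu q"] by linarith
  qed
  have x0: "x (-1) = 0" "y (-1) = 0" unfolding x_def y_def using init by auto
  have "(x p)^2 + (y p)^2 + E^2 \<le> (0^2 + 0^2 + E^2) * exp ((2 * LL M + 2) * (p+1))"
    using energy[OF dx dy bx byy LL_nonneg[OF M] E] p x0 by auto
  also have "\<dots> \<le> E^2 * exp (KK M)"
  proof -
    have "(2 * LL M + 2) * (p+1) \<le> 2 * LL M + 2" using p LL_nonneg[OF M] by (intro mult_left_le) auto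
    then show ?thesis unfolding KK_def by (simp add: mult_left_mono)
  qed
  also have "\<dots> \<le> (E * exp (KK M))^2"
  proof -
    have e1: "1 \<le> exp (KK M)" unfolding KK_def using LL_nonneg[OF M] by simp
    have "exp (KK M) \<le> exp (KK M)^2" using e1 by (simp add: power2_eq_square)
    then show ?thesis unfolding power_mult_distrib by (intro mult_left_mono) auto
  qed
  finally have "(x p)^2 + (y p)^2 \<le> (E * exp (KK M))^2" using zero_le_power2[of E] by linarith
  moreover have "E * exp (KK M) = CL M * \<bar>mu - nu\<bar>" unfolding E_def CL_def by simp
  ultimately show "\<bar>Phi Hp rhop mu p - Phi Hp rhop nu p\<bar> \<le> CL M * \<bar>mu - nu\<bar>"
        "\<bar>uu mu p - uu nu p\<bar> \<le> CL M * \<bar>mu - nu\<bar>"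
    using sq_bound[of "x p" "y p" "CL M * \<bar>mu - nu\<bar>"] CL_nonneg[OF M] unfolding x_def y_def by auto
qed


lemma lipA:
  assumes mu: "0 \<le> mu" "mu \<le> M" and nu: "0 \<le> nu" "nu \<le> M"
  shows "\<bar>A_fun Hp rho rhop mu - A_fun Hp rho rhop nu\<bar> \<le> CA M * \<bar>mu - nu\<bar>"
proof -
  have p0: "(0::real) \<in> {-1..0}" by simp
  note l1 = lip[OF mu nu p0]
  have "mu * Phi Hp rhop mu 0 - nu * Phi Hp rhop nu 0
        = mu * (Phi Hp rhop mu 0 - Phi Hp rhop nu 0) + (mu - nu) * Phi Hp rhop nu 0" by (simp add: algebra_simps)
  then have "\<bar>mu * Phi Hp rhop mu 0 - nu * Phi Hp rhop nu 0\<bar>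
        \<le> mu * \<bar>Phi Hp rhop mu 0 - Phi Hp rhop nu 0\<bar> + \<bar>mu - nu\<bar> * \<bar>Phi Hp rhop nu 0\<bar>"
  proof -
    have "\<bar>mu * (Phi Hp rhop mu 0 - Phi Hp rhop nu 0) + (mu - nu) * Phi Hp rhop nu 0\<bar>
       \<le> \<bar>mu * (Phi Hp rhop mu 0 - Phi Hp rhop nu 0)\<bar> + \<bar>(mu - nu) * Phi Hp rhop nu 0\<bar>" by (rule abs_triangle_ineq)
    then show ?thesis using mu \<open>mu * Phi Hp rhop mu 0 - nu * Phi Hp rhop nu 0 = _\<close> by (simp add: abs_mult)
  qed
  also have "\<dots> \<le> M * (CL M * \<bar>mu - nu\<bar>) + \<bar>mu - nu\<bar> * XB M"
    using l1(1) sol_bound(1)[OF nu p0] mu CL_nonneg[of M]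
    by (intro add_mono mult_mono) auto
  finally have 2: "\<bar>mu * Phi Hp rhop mu 0 - nu * Phi Hp rhop nu 0\<bar> \<le> M * (CL M * \<bar>mu - nu\<bar>) + \<bar>mu - nu\<bar> * XB M" .
  have "A_fun Hp rho rhop mu - A_fun Hp rho rhop nu
     = - (uu mu 0 - uu nu 0) + rho 0 * (mu * Phi Hp rhop mu 0 - nu * Phi Hp rhop nu 0)"
    unfolding Aeq by (simp add: algebra_simps)
  then have "\<bar>A_fun Hp rho rhop mu - A_fun Hp rho rhop nu\<bar>
     \<le> \<bar>uu mu 0 - uu nu 0\<bar> + rho 0 * \<bar>mu * Phi Hp rhop mu 0 - nu * Phi Hp rhop nu 0\<bar>"
  proof -
    have "\<bar>- (uu mu 0 - uu nu 0) + rho 0 * (mu * Phi Hp rhop mu 0 - nu * Phi Hp rhop nu 0)\<bar>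
       \<le> \<bar>- (uu mu 0 - uu nu 0)\<bar> + \<bar>rho 0 * (mu * Phi Hp rhop mu 0 - nu * Phi Hp rhop nu 0)\<bar>" by (rule abs_triangle_ineq)
    then show ?thesis using rho0 \<open>A_fun Hp rho rhop mu - A_fun Hp rho rhop nu = _\<close> by (simp add: abs_mult)
  qed
  also have "\<dots> \<le> CL M * \<bar>mu - nu\<bar> + rho 0 * (M * (CL M * \<bar>mu - nu\<bar>) + \<bar>mu - nu\<bar> * XB M)"
    using l1(2) 2 rho0 by (intro add_mono mult_left_mono) auto
  also have "\<dots> = CA M * \<bar>mu - nu\<bar>" unfolding CA_def by (simp add: algebra_simps)
  finally show ?thesis .
qed

end

context setting begin

lemma u_nonneg_props:
  assumes mu: "0 \<le> mu" and u: "\<forall>p\<in>{-1..0}. uu mu p \<ge> 0"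
  shows "\<And>s t. -1 \<le> s \<Longrightarrow> s \<le> t \<Longrightarrow> t \<le> 0 \<Longrightarrow> Phi Hp rhop mu s \<le> Phi Hp rhop mu t"
    and "\<forall>p\<in>{-1..0}. Phi Hp rhop mu p \<ge> 0"
    and "\<And>s t. -1 \<le> s \<Longrightarrow> s \<le> t \<Longrightarrow> t \<le> 0 \<Longrightarrow> uu mu t \<le> uu mu s"
proof -
  have d1: "\<forall>x\<in>{-1..0}. (Phi Hp rhop mu has_real_derivative Hp x ^ 3 * uu mu x) (at x within {-1..0})"
    using dPhi by blast
  have n1: "\<forall>x\<in>{-1..0}. Hp x ^ 3 * uu mu x \<ge> 0" using u Hp3_pos by (simp add: less_imp_le)
  show m: "\<And>s t. -1 \<le> s \<Longrightarrow> s \<le> t \<Longrightarrow> t \<le> 0 \<Longrightarrow> Phi Hp rhop mu s \<le> Phi Hp rhop mu t"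
    by (rule mono_nonneg[OF d1 n1]) auto
  show nn: "\<forall>p\<in>{-1..0}. Phi Hp rhop mu p \<ge> 0"
    using m[of "-1"] init by auto
  have d2: "\<forall>x\<in>{-1..0}. (uu mu has_real_derivative mu * rhop x * Phi Hp rhop mu x) (at x within {-1..0})"
    using duu by blast
  have n2: "\<forall>x\<in>{-1..0}. mu * rhop x * Phi Hp rhop mu x \<le> 0"
  proof
    fix x :: real assume x: "x \<in> {-1..0}"
    have "mu * rhop x \<le> 0" using mu rhop_nonpos x by (simp add: mult_nonneg_nonpos)
    then show "mu * rhop x * Phi Hp rhop mu x \<le> 0" using nn x by (simp add: mult_nonpos_nonneg)
  qed
  show "\<And>s t. -1 \<le> s \<Longrightarrow> s \<le> t \<Longrightarrow> t \<le> 0 \<Longrightarrow> uu mu t \<le> uu mu s"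
    by (rule mono_nonpos[OF d2 n2]) auto
qed

lemma u_pos_Phi_pos:
  assumes u: "\<forall>p\<in>{-1..0}. uu mu p > 0" and p: "p \<in> {-1<..0}"
  shows "Phi Hp rhop mu p > 0"
proof -
  have d1: "\<forall>x\<in>{-1..0}. (Phi Hp rhop mu has_real_derivative Hp x ^ 3 * uu mu x) (at x within {-1..0})"
    using dPhi by blast
  have n1: "\<forall>x\<in>{-1..0}. Hp x ^ 3 * uu mu x > 0" using u Hp3_pos by simp
  have "Phi Hp rhop mu (-1) < Phi Hp rhop mu p" by (rule mono_pos[OF d1 n1]) (use p in auto)
  then show ?thesis using init by simp
qed

lemma zero_case:
  assumes mu: "0 < mu" and u: "\<forall>p\<in>{-1..0}. uu mu p \<ge> 0" and p0: "p0 \<in> {-1..0}" "uu mu p0 = 0"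
  shows "A_fun Hp rho rhop mu > 0"
proof -
  note pr = u_nonneg_props[OF less_imp_le[OF mu] u]
  have "uu mu 0 \<le> uu mu p0" using pr(3)[of p0 0] p0 by auto
  moreover have "uu mu 0 \<ge> 0" using u by auto
  ultimately have u0: "uu mu 0 = 0" using p0 by linarith
  have Phi0: "Phi Hp rhop mu 0 > 0"
  proof (rule ccontr)
    assume "\<not> Phi Hp rhop mu 0 > 0"
    then have z: "\<forall>p\<in>{-1..0}. Phi Hp rhop mu p = 0" using pr(1)[of _ 0] pr(2) by force
    have d2: "\<forall>x\<in>{-1..0}. (uu mu has_real_derivative 0) (at x within {-1..0})"
    proof
      fix x :: real assume x: "x \<in> {-1..0}"
      show "(uu mu has_real_derivative 0) (at x within {-1..0})" using duu[OF x, of mu] z x by simp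
    qed
    have "uu mu p0 \<le> uu mu (-1)" by (rule mono_nonpos[OF d2]) (use p0 in auto)
    moreover have "uu mu (-1) \<le> uu mu p0" by (rule mono_nonneg[OF d2]) (use p0 in auto)
    ultimately show False using init c0_pos p0 by simp
  qed
  show ?thesis unfolding Aeq using u0 Phi0 mu rho0 by simp
qed

lemma amin_ex: "\<exists>am>0. \<forall>p\<in>{-1..0}. am \<le> Hp p ^ 3"
proof -
  have "continuous_on {-1..0} (\<lambda>s. Hp s ^ 3)" using cHp by (intro continuous_intros)
  then obtain q where q: "q \<in> {-1..0}" "\<forall>p\<in>{-1..0}. Hp q ^ 3 \<le> Hp p ^ 3"
    using continuous_attains_inf[OF compact_Icc, of "-1" 0 "\<lambda>s. Hp s ^ 3"] by auto
  then show ?thesis using Hp3_pos[OF q(1)] by blast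
qed

lemma large_case:
  assumes mu: "0 \<le> mu" and u: "\<forall>p\<in>{-1..0}. uu mu p > 0"
    and am: "am > 0" "\<forall>p\<in>{-1..0}. am \<le> Hp p ^ 3" and big: "mu * am * rho 0 > 1"
  shows "A_fun Hp rho rhop mu > 0"
proof (rule ccontr)
  assume "\<not> A_fun Hp rho rhop mu > 0"
  then have A: "uu mu 0 \<ge> mu * rho 0 * Phi Hp rhop mu 0" unfolding Aeq by simp
  have u': "\<forall>p\<in>{-1..0}. uu mu p \<ge> 0" using u by (simp add: less_imp_le)
  note pr = u_nonneg_props[OF mu u']
  have Phi0: "Phi Hp rhop mu 0 > 0" by (rule u_pos_Phi_pos[OF u]) simp
  define g where "g = (\<lambda>p. Phi Hp rhop mu p - am * uu mu 0 * p)"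
  have dg: "\<forall>x\<in>{-1..0}. (g has_real_derivative Hp x ^ 3 * uu mu x - am * uu mu 0) (at x within {-1..0})"
    unfolding g_def by (auto intro!: derivative_eq_intros dPhi)
  have ng: "\<forall>x\<in>{-1..0}. Hp x ^ 3 * uu mu x - am * uu mu 0 \<ge> 0"
  proof
    fix x :: real assume x: "x \<in> {-1..0}"
    have "am * uu mu 0 \<le> am * uu mu x" using pr(3)[of x 0] x am by (intro mult_left_mono) auto
    also have "\<dots> \<le> Hp x ^ 3 * uu mu x" using am(2) x u by (intro mult_right_mono) (auto simp: less_imp_le)
    finally show "Hp x ^ 3 * uu mu x - am * uu mu 0 \<ge> 0" by simp
  qed
  have "g (-1) \<le> g 0" by (rule mono_nonneg[OF dg ng]) auto
  then have "am * uu mu 0 \<le> Phi Hp rhop mu 0" unfolding g_def using init by simp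
  moreover have "am * (mu * rho 0 * Phi Hp rhop mu 0) \<le> am * uu mu 0" using A am by (intro mult_left_mono) auto
  ultimately have "(mu * am * rho 0) * Phi Hp rhop mu 0 \<le> 1 * Phi Hp rhop mu 0" by (simp add: algebra_simps)
  moreover have "1 * Phi Hp rhop mu 0 < (mu * am * rho 0) * Phi Hp rhop mu 0"
    using big Phi0 by (intro mult_strict_right_mono) auto
  ultimately show False by simp
qed

lemma zero_mu: "\<forall>p\<in>{-1..0}. uu 0 p = c0" "A_fun Hp rho rhop 0 < 0"
proof -
  have d2: "\<forall>x\<in>{-1..0}. (uu 0 has_real_derivative 0) (at x within {-1..0})"
    using duu[of _ 0] by force
  show u: "\<forall>p\<in>{-1..0}. uu 0 p = c0"
  proof
    fix p :: real assume p: "p \<in> {-1..0}"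
    have "uu 0 p \<le> uu 0 (-1)" by (rule mono_nonpos[OF d2]) (use p in auto)
    moreover have "uu 0 (-1) \<le> uu 0 p" by (rule mono_nonneg[OF d2]) (use p in auto)
    ultimately show "uu 0 p = c0" using init by simp
  qed
  show "A_fun Hp rho rhop 0 < 0" unfolding Aeq using u c0_pos by simp
qed

end

context setting begin

definition "good mu \<longleftrightarrow> (\<forall>p\<in>{-1..0}. uu mu p > 0) \<and> A_fun Hp rho rhop mu < 0"

lemma good_open:
  assumes g: "good mu" and mu: "0 \<le> mu" "mu \<le> M"
  shows "\<exists>d>0. \<forall>nu. 0 \<le> nu \<and> nu \<le> M \<and> \<bar>nu - mu\<bar> < d \<longrightarrow> good nu"
proof -
  have M: "0 \<le> M" using mu by simp
  have "continuous_on {-1..0} (uu mu)" using duu by (intro DERIV_continuous_on) auto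
  then obtain q where q: "q \<in> {-1..0}" "\<forall>p\<in>{-1..0}. uu mu q \<le> uu mu p"
    using continuous_attains_inf[OF compact_Icc, of "-1" 0 "uu mu"] by auto
  define m0 where "m0 = min (uu mu q) (- A_fun Hp rho rhop mu)"
  have m0: "m0 > 0" unfolding m0_def using g q unfolding good_def by auto
  define C where "C = CL M + \<bar>CA M\<bar> + 1"
  have C: "C > 0" "CL M \<le> C" "CA M \<le> C" unfolding C_def using CL_nonneg[OF M] by auto
  show ?thesis
  proof (intro exI[of _ "m0 / C"] conjI allI impI)
    show "m0 / C > 0" using m0 C by simp
    fix nu assume nu: "0 \<le> nu \<and> nu \<le> M \<and> \<bar>nu - mu\<bar> < m0 / C"
    have lt: "C * \<bar>nu - mu\<bar> < m0" using nu C(1) by (simp add: field_simps)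
    have "\<forall>p\<in>{-1..0}. uu nu p > 0"
    proof
      fix p :: real assume p: "p \<in> {-1..0}"
      have "\<bar>uu nu p - uu mu p\<bar> \<le> CL M * \<bar>nu - mu\<bar>" using lip(2)[of nu M mu p] nu mu p by auto
      also have "\<dots> \<le> C * \<bar>nu - mu\<bar>" using C by (intro mult_right_mono) auto
      finally have "\<bar>uu nu p - uu mu p\<bar> < m0" using lt by linarith
      moreover have "m0 \<le> uu mu p" using q p unfolding m0_def by force
      ultimately show "uu nu p > 0" by linarith
    qed
    moreover have "A_fun Hp rho rhop nu < 0"
    proof -
      have "\<bar>A_fun Hp rho rhop nu - A_fun Hp rho rhop mu\<bar> \<le> CA M * \<bar>nu - mu\<bar>" using lipA[of nu M mu] nu mu by auto
      also have "\<dots> \<le> C * \<bar>nu - mu\<bar>" using C by (intro mult_right_mono) auto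
      finally have "\<bar>A_fun Hp rho rhop nu - A_fun Hp rho rhop mu\<bar> < m0" using lt by linarith
      moreover have "m0 \<le> - A_fun Hp rho rhop mu" unfolding m0_def by simp
      ultimately show ?thesis by linarith
    qed
    ultimately show "good nu" unfolding good_def by simp
  qed
qed

lemma left_limit:
  fixes f :: "real \<Rightarrow> real"
  assumes m: "0 < m" and C: "0 \<le> C"
    and h: "\<And>nu. 0 \<le> nu \<Longrightarrow> nu < m \<Longrightarrow> f nu > 0 \<and> \<bar>f m - f nu\<bar> \<le> C * \<bar>m - nu\<bar>"
  shows "f m \<ge> 0"
proof (rule ccontr)
  assume neg: "\<not> f m \<ge> 0"
  define s where "s = - f m / (2 * (C + 1))"
  have s: "0 < s" unfolding s_def using neg C by (intro divide_pos_pos) auto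
  define t where "t = min m s / 2"
  have t: "0 < t" "t < m" "t \<le> - f m / (2 * (C + 1))" using m s unfolding t_def s_def[symmetric] by auto
  have "f (m - t) > 0" "\<bar>f m - f (m - t)\<bar> \<le> C * \<bar>m - (m - t)\<bar>" using h[of "m - t"] t by auto
  moreover have "C * t \<le> - f m / 2"
  proof -
    have "C * t \<le> (C + 1) * t" using t by simp
    also have "\<dots> \<le> (C + 1) * (- f m / (2 * (C + 1)))" using t C by (intro mult_left_mono) auto
    also have "\<dots> = - f m / 2" using C by (simp add: field_simps)
    finally show ?thesis .
  qed
  ultimately show False using t neg by auto
qed

lemma mucr_exists:
  "\<exists>m>0. (\<forall>p\<in>{-1..0}. uu m p > 0) \<and> A_fun Hp rho rhop m = 0 \<and>
      (\<forall>mu. 0 \<le> mu \<and> mu < m \<longrightarrow> good mu)"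
proof -
  obtain am where am: "am > 0" "\<forall>p\<in>{-1..0}. am \<le> Hp p ^ 3" using amin_ex by blast
  define M where "M = 1 / (am * rho 0) + 1"
  have M: "0 \<le> M" unfolding M_def using am rho0 by simp
  define B where "B = {mu. 0 \<le> mu \<and> mu \<le> M \<and> \<not> good mu}"
  have good0: "good 0" using zero_mu c0_pos unfolding good_def by simp
  have MB: "M \<in> B"
  proof -
    have "M * am * rho 0 = 1 + am * rho 0" unfolding M_def using am rho0 by (simp add: field_simps)
    then have "M * am * rho 0 > 1" using am rho0 by simp
    then have "\<not> good M" using large_case[OF M _ am] unfolding good_def by auto
    then show ?thesis unfolding B_def using M by simp
  qed
  have bdd: "bdd_below B" unfolding B_def by (rule bdd_belowI[of _ 0]) auto
  define m where "m = Inf B"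
  have mle: "m \<le> M" unfolding m_def by (rule cInf_lower[OF MB bdd])
  have mge: "0 \<le> m" unfolding m_def by (rule cInf_greatest) (use MB B_def in auto)
  have below: "good mu" if "0 \<le> mu" "mu < m" for mu
  proof (rule ccontr)
    assume "\<not> good mu"
    then have "mu \<in> B" unfolding B_def using that mle by auto
    then have "m \<le> mu" unfolding m_def by (rule cInf_lower[OF _ bdd])
    then show False using that by simp
  qed
  have mB: "\<not> good m"
  proof
    assume gm: "good m"
    obtain d where d: "d > 0" "\<forall>nu. 0 \<le> nu \<and> nu \<le> M \<and> \<bar>nu - m\<bar> < d \<longrightarrow> good nu"
      using good_open[OF gm mge mle] by blast
    have "m + d \<le> m" unfolding m_def[symmetric]
    proof (subst m_def, rule cInf_greatest)
      show "B \<noteq> {}" using MB by auto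
      fix b assume b: "b \<in> B"
      then have "m \<le> b" unfolding m_def by (rule cInf_lower[OF _ bdd])
      moreover have "\<not> (\<bar>b - m\<bar> < d)" using d b unfolding B_def by auto
      ultimately show "m + d \<le> b" by linarith
    qed
    then show False using d by simp
  qed
  have mpos: "0 < m" using mge mB good0 by (cases "m = 0") auto
  have Cnn: "0 \<le> CL M" "0 \<le> \<bar>CA M\<bar>" using CL_nonneg[OF M] by auto
  have upos: "\<forall>p\<in>{-1..0}. uu m p \<ge> 0"
  proof
    fix p :: real assume p: "p \<in> {-1..0}"
    show "uu m p \<ge> 0"
    proof (rule left_limit[OF mpos Cnn(1), of "\<lambda>mu. uu mu p"])
      fix nu :: real assume nu: "0 \<le> nu" "nu < m"
      show "uu nu p > 0 \<and> \<bar>uu m p - uu nu p\<bar> \<le> CL M * \<bar>m - nu\<bar>"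
        using below[OF nu] lip(2)[of m M nu p] nu mge mle p unfolding good_def by auto
    qed
  qed
  have Anp: "- A_fun Hp rho rhop m \<ge> 0"
  proof (rule left_limit[OF mpos Cnn(2), of "\<lambda>mu. - A_fun Hp rho rhop mu"])
    fix nu :: real assume nu: "0 \<le> nu" "nu < m"
    have "\<bar>A_fun Hp rho rhop m - A_fun Hp rho rhop nu\<bar> \<le> CA M * \<bar>m - nu\<bar>" using lipA[of m M nu] nu mge mle by auto
    also have "\<dots> \<le> \<bar>CA M\<bar> * \<bar>m - nu\<bar>" by (intro mult_right_mono) auto
    finally show "- A_fun Hp rho rhop nu > 0 \<and> \<bar>- A_fun Hp rho rhop m - - A_fun Hp rho rhop nu\<bar> \<le> \<bar>CA M\<bar> * \<bar>m - nu\<bar>"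
      using below[OF nu] unfolding good_def by auto
  qed
  have uall: "\<forall>p\<in>{-1..0}. uu m p > 0"
  proof (rule ccontr)
    assume "\<not> (\<forall>p\<in>{-1..0}. uu m p > 0)"
    then obtain p0 where p0: "p0 \<in> {-1..0}" "uu m p0 \<le> 0" by force
    then have "uu m p0 = 0" using upos by force
    then have "A_fun Hp rho rhop m > 0" using zero_case[OF mpos upos p0(1)] by simp
    then show False using Anp by simp
  qed
  then have "A_fun Hp rho rhop m = 0" using mB Anp unfolding good_def by auto
  then show ?thesis using mpos uall below by blast
qed

end

lemma reg_cont:
  assumes C: "C_k_alpha k a {-1..0} f" and k: "1 < k"
    and d: "\<forall>x\<in>{-1..0}. (f has_real_derivative f' x) (at x within {-1..0})"
  shows "continuous_on {-1..0} f'"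
proof -
  obtain D where D0: "\<forall>x\<in>{-1..0}. D 0 x = f x"
    and D: "\<forall>i<k. \<forall>x\<in>{-1..0}. (D i has_real_derivative D (Suc i) x) (at x within {-1..0})"
    using C unfolding C_k_alpha_def by blast
  have k0: "0 < k" using k by simp
  have eq: "f' x = D 1 x" if x: "x \<in> {-1..0}" for x
  proof -
    have "(D 0 has_real_derivative D (Suc 0) x) (at x within {-1..0})" using D k0 x by blast
    then have d0: "(D 0 has_real_derivative D 1 x) (at x within {-1..0})" by simp
    have e: "f y = D 0 y" if "y \<in> {-1..0}" for y using D0 that by simp
    have d1: "(f has_vector_derivative D 1 x) (at x within cbox (-1) 0)"
      using deriv_transform[OF x e d0] unfolding has_real_derivative_iff_has_vector_derivative cbox_interval .
    have d2: "(f has_vector_derivative f' x) (at x within cbox (-1) 0)"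
      using d x unfolding has_real_derivative_iff_has_vector_derivative cbox_interval by blast
    have x': "x \<in> cbox (-1::real) 0" using x unfolding cbox_interval .
    show ?thesis by (rule vector_derivative_unique_within_closed_interval[OF _ x' d2 d1]) simp
  qed
  have "\<forall>x\<in>{-1..0}. (D 1 has_real_derivative D (Suc 1) x) (at x within {-1..0})" using D k by blast
  then have "continuous_on {-1..0} (D 1)" by (intro DERIV_continuous_on) blast
  moreover have "\<forall>x\<in>{-1..0}. D 1 x = f' x" using eq by simp
  ultimately show ?thesis using continuous_on_cong by blast
qed

theorem lemma3p1:
  fixes alpha :: real and rho rhop H Hp :: "real \<Rightarrow> real"
  assumes alpha: "0 < alpha" "alpha < 1"
    and rho_reg: "C_k_alpha 2 alpha {-1..0} rho"
    and H_reg: "C_k_alpha 3 alpha {-1..0} H"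
    and rho_deriv: "\<forall>x\<in>{-1..0}. (rho has_real_derivative rhop x) (at x within {-1..0})"
    and H_deriv: "\<forall>x\<in>{-1..0}. (H has_real_derivative Hp x) (at x within {-1..0})"
    and rho_pos: "\<forall>x\<in>{-1..0}. rho x > 0"
    and rhop_nonpos: "\<forall>x\<in>{-1..0}. rhop x \<le> 0"
    and Hp_pos: "\<forall>x\<in>{-1..0}. Hp x > 0"
  shows "\<exists>!mucr. mucr > 0 \<and>
     \<comment> \<open>(a)\<close>
     (\<exists>w w'. is_bvp_sol Hp rho rhop mucr w w' \<and> (\<exists>p\<in>{-1..0}. w p \<noteq> 0)) \<and>
     is_bvp_sol Hp rho rhop mucr (Phi Hp rhop mucr) (Phi_p Hp rhop mucr) \<and>
     (\<exists>p\<in>{-1..0}. Phi Hp rhop mucr p \<noteq> 0) \<and>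
     \<comment> \<open>(b)\<close>
     (\<forall>mu. 0 \<le> mu \<and> mu \<le> mucr \<longrightarrow>
        (\<forall>p\<in>{-1<..0}. Phi Hp rhop mu p > 0) \<and>
        (\<forall>p\<in>{-1..0}. Phi_p Hp rhop mu p > 0)) \<and>
     \<comment> \<open>(c)\<close>
     (\<forall>mu. 0 \<le> mu \<and> mu < mucr \<longrightarrow> A_fun Hp rho rhop mu < 0)"
proof -
  have cHp: "continuous_on {-1..0} Hp" by (rule reg_cont[OF H_reg _ H_deriv]) simp
  have crhop: "continuous_on {-1..0} rhop" by (rule reg_cont[OF rho_reg _ rho_deriv]) simp
  have rho0: "rho 0 > 0" using rho_pos by auto
  interpret S: setting rho rhop Hp
    by (unfold_locales) (use cHp crhop Hp_pos rho0 rhop_nonpos in auto)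
  obtain m where m: "m > 0" "\<forall>p\<in>{-1..0}. S.uu m p > 0" "A_fun Hp rho rhop m = 0"
    "\<forall>mu. 0 \<le> mu \<and> mu < m \<longrightarrow> S.good mu"
    using S.mucr_exists by blast
  have bvp_A: "is_bvp_sol Hp rho rhop mu (Phi Hp rhop mu) (Phi_p Hp rhop mu) \<longleftrightarrow> A_fun Hp rho rhop mu = 0" for mu
  proof -
    have "is_Phi Hp rhop mu (Phi Hp rhop mu) (Phi_p Hp rhop mu)" by (rule S.Phi_is_Phi)
    then show ?thesis unfolding is_bvp_sol_def is_Phi_def A_fun_def by blast
  qed
  have upos: "\<forall>p\<in>{-1..0}. S.uu mu p > 0" if "0 \<le> mu" "mu \<le> m" for mu
  proof (cases "mu = m")
    case True then show ?thesis using m by simp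
  next
    case False then show ?thesis using m(4) that unfolding S.good_def by auto
  qed
  have Php: "Phi_p Hp rhop mu p = Hp p ^ 3 * S.uu mu p" if "p \<in> {-1..0}" for mu p
    using S.Hp3_pos[OF that] unfolding S.uu_def by simp
  let ?P = "\<lambda>mucr. mucr > 0 \<and>
     (\<exists>w w'. is_bvp_sol Hp rho rhop mucr w w' \<and> (\<exists>p\<in>{-1..0}. w p \<noteq> 0)) \<and>
     is_bvp_sol Hp rho rhop mucr (Phi Hp rhop mucr) (Phi_p Hp rhop mucr) \<and>
     (\<exists>p\<in>{-1..0}. Phi Hp rhop mucr p \<noteq> 0) \<and>
     (\<forall>mu. 0 \<le> mu \<and> mu \<le> mucr \<longrightarrow>
        (\<forall>p\<in>{-1<..0}. Phi Hp rhop mu p > 0) \<and>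
        (\<forall>p\<in>{-1..0}. Phi_p Hp rhop mu p > 0)) \<and>
     (\<forall>mu. 0 \<le> mu \<and> mu < mucr \<longrightarrow> A_fun Hp rho rhop mu < 0)"
  show ?thesis
  proof (rule ex1I[of ?P m])
    have bvp: "is_bvp_sol Hp rho rhop m (Phi Hp rhop m) (Phi_p Hp rhop m)" using bvp_A m(3) by simp
    have nz: "Phi Hp rhop m 0 \<noteq> 0" using S.u_pos_Phi_pos[OF m(2), of 0] by simp
    have b: "\<forall>mu. 0 \<le> mu \<and> mu \<le> m \<longrightarrow>
        (\<forall>p\<in>{-1<..0}. Phi Hp rhop mu p > 0) \<and> (\<forall>p\<in>{-1..0}. Phi_p Hp rhop mu p > 0)"
    proof (intro allI impI conjI)
      fix mu :: real assume mu: "0 \<le> mu \<and> mu \<le> m"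
      show "\<forall>p\<in>{-1<..0}. Phi Hp rhop mu p > 0"
      proof
        fix p :: real assume p: "p \<in> {-1<..0}"
        show "Phi Hp rhop mu p > 0" using S.u_pos_Phi_pos[OF upos p] mu by auto
      qed
      show "\<forall>p\<in>{-1..0}. Phi_p Hp rhop mu p > 0"
      proof
        fix p :: real assume p: "p \<in> {-1..0}"
        have "S.uu mu p > 0" using upos[of mu] mu p by auto
        then show "Phi_p Hp rhop mu p > 0" using Php[OF p] S.Hp3_pos[OF p] by simp
      qed
    qed
    have c: "\<forall>mu. 0 \<le> mu \<and> mu < m \<longrightarrow> A_fun Hp rho rhop mu < 0"
      using m(4) unfolding S.good_def by blast
    show "?P m"
    proof (intro conjI)
      show "m > 0" by (rule m(1))
      show "\<exists>w w'. is_bvp_sol Hp rho rhop m w w' \<and> (\<exists>p\<in>{-1..0}. w p \<noteq> 0)"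
        by (rule exI[of _ "Phi Hp rhop m"], rule exI[of _ "Phi_p Hp rhop m"]) (use bvp nz in force)
      show "is_bvp_sol Hp rho rhop m (Phi Hp rhop m) (Phi_p Hp rhop m)" by (rule bvp)
      show "\<exists>p\<in>{-1..0}. Phi Hp rhop m p \<noteq> 0" using nz by force
    qed (use b c in blast)+
  next
    fix m' assume P': "?P m'"
    have A': "A_fun Hp rho rhop m' = 0" using P' bvp_A by blast
    show "m' = m"
    proof (rule ccontr)
      assume "m' \<noteq> m"
      then consider "m' < m" | "m < m'" by linarith
      then show False
      proof cases
        case 1
        then have "S.good m'" using m(4) P' by simp
        then show False using A' unfolding S.good_def by simp
      next
        case 2
        then have "A_fun Hp rho rhop m < 0" using P' m(1) by simp
        then show False using m(3) by simp
      qed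
    qed
  qed
qed

end
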